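(* Let $S$ be an inverse semigroup with zero whose semilattice of idempotents is $0$-disjunctive. Then $S$ is a Clifford semigroup if and only if $S$ contains no infinitesimals.
   Context: A semigroup is inverse if each $s$ has a unique $s^{-1}$ with $s=ss^{-1}s$, $s^{-1}=s^{-1}ss^{-1}$; its idempotents form a meet semilattice with $e\le f$ iff $e=ef$. A meet semilattice with zero is $0$-disjunctive if for all $0\ne f<e$ there exists $0\ne g\le e$ with $fg=0$. A Clifford semigroup is an inverse semigroup whose idempotents are central. An infinitesimal is a non-zero element $a$ with $a^2=0$. *)

theory Defs
  imports Main
begin

text \<open>The semigroup S is the whole type 'a (with the multiplication of semigroup_mult).\<close>

definition inverse_semigroup :: "'a::semigroup_mult itself \<Rightarrow> bool" where
  "inverse_semigroup _ \<longleftrightarrow> (\<forall>s::'a. \<exists>!t. s = s * t * s \<and> t = t * s * t)"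

definition is_zero :: "'a::semigroup_mult \<Rightarrow> bool" where
  "is_zero z \<longleftrightarrow> (\<forall>x. z * x = z \<and> x * z = z)"

definition idem :: "'a::semigroup_mult \<Rightarrow> bool" where
  "idem e \<longleftrightarrow> e * e = e"

definition idem_le :: "'a::semigroup_mult \<Rightarrow> 'a \<Rightarrow> bool" where
  "idem_le e f \<longleftrightarrow> e = e * f"

definition zero_disjunctive :: "'a::semigroup_mult \<Rightarrow> bool" where
  "zero_disjunctive z \<longleftrightarrow>
     (\<forall>e f. idem e \<and> idem f \<and> f \<noteq> z \<and> idem_le f e \<and> f \<noteq> e \<longrightarrow>
        (\<exists>g. idem g \<and> g \<noteq> z \<and> idem_le g e \<and> f * g = z))"

definition clifford :: "'a::semigroup_mult itself \<Rightarrow> bool" where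
  "clifford T \<longleftrightarrow> inverse_semigroup T \<and> (\<forall>e s::'a. idem e \<longrightarrow> e * s = s * e)"

definition infinitesimal :: "'a::semigroup_mult \<Rightarrow> 'a \<Rightarrow> bool" where
  "infinitesimal z a \<longleftrightarrow> a \<noteq> z \<and> a * a = z"

end

theory Submission
  imports Defs
begin

definition sinv :: "'a::semigroup_mult \<Rightarrow> 'a" where
  "sinv s = (THE t. s = s * t * s \<and> t = t * s * t)"

context
  assumes I: "inverse_semigroup TYPE('a::semigroup_mult)"
begin

lemma sinv_ok: "(s::'a) = s * sinv s * s \<and> sinv s = sinv s * s * sinv s"
proof -
  from I have "\<exists>!t. s = s * t * s \<and> t = t * s * t" by (simp add: inverse_semigroup_def)
  then show ?thesis unfolding sinv_def by (rule theI')
qed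

lemma sinv_uniq: "(s::'a) = s * t * s \<Longrightarrow> t = t * s * t \<Longrightarrow> t = sinv s"
proof -
  assume a: "s = s * t * s" "t = t * s * t"
  from I have "\<exists>!t. s = s * t * s \<and> t = t * s * t" by (simp add: inverse_semigroup_def)
  then show ?thesis using a sinv_ok[of s] by blast
qed

lemma idem_prod: "(e::'a) * e = e \<Longrightarrow> f * f = f \<Longrightarrow> (e * f) * (e * f) = e * f"
proof -
  assume ee: "e * e = e" and ff: "f * f = f"
  define x where "x = sinv (e * f)"
  have x1: "e * f = e * f * x * (e * f)" "x = x * (e * f) * x" using sinv_ok[of "e*f"] x_def by auto
  define y where "y = f * x * e"
  have "e * f * y * (e * f) = e * (f * f) * x * (e * e) * f" by (simp add: y_def mult.assoc)
  also have "\<dots> = e * f" using x1 ee ff by (simp add: mult.assoc)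
  finally have y1: "e * f = e * f * y * (e * f)" by simp
  have "y * (e * f) * y = f * (x * (e * e) * (f * f) * x) * e" by (simp add: y_def mult.assoc)
  also have "\<dots> = y" using x1 ee ff by (simp add: y_def mult.assoc)
  finally have "y = x" using sinv_uniq[OF y1] x_def by simp
  hence xfe: "x = f * x * e" using y_def by simp
  have xx: "x * x = x"
  proof -
    have "x * x = f * (x * (e * f) * x) * e" using xfe by (metis mult.assoc)
    also have "\<dots> = x" using x1 xfe by (metis)
    finally show ?thesis .
  qed
  have "x = x * x * x" using xx by simp
  hence "x = sinv x" using sinv_uniq[of x x] by simp
  moreover have "e * f = sinv x" using sinv_uniq[of x "e*f"] x1 by (metis mult.assoc)
  ultimately have "e * f = x" by simp
  thus ?thesis using xx by simp
qed

lemma idem_comm: "(e::'a) * e = e \<Longrightarrow> f * f = f \<Longrightarrow> e * f = f * e"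
proof -
  assume ee: "e * e = e" and ff: "f * f = f"
  have p1: "(e * f) * (e * f) = e * f" using idem_prod ee ff by blast
  have p2: "(f * e) * (f * e) = f * e" using idem_prod ee ff by blast
  have "e * f = (e * f) * (e * f) * (e * f)" using p1 by simp
  hence a: "e * f = sinv (e * f)" using sinv_uniq by simp
  have "e * f * (f * e) * (e * f) = (e * f) * (e * f)"
    using ee ff by (metis mult.assoc)
  hence b1: "e * f = e * f * (f * e) * (e * f)" using p1 by simp
  have "f * e * (e * f) * (f * e) = (f * e) * (f * e)"
    using ee ff by (metis mult.assoc)
  hence b2: "f * e = f * e * (e * f) * (f * e)" using p2 by simp
  have "f * e = sinv (e * f)" using sinv_uniq[OF b1 b2] .
  thus ?thesis using a by simp
qed

lemma sinv_sinv: "sinv (sinv (s::'a)) = s"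
proof -
  have "s = s * sinv s * s" "sinv s = sinv s * s * sinv s" using sinv_ok by auto
  thus ?thesis using sinv_uniq[of "sinv s" s] by simp
qed

lemma sinv_l: "s * (sinv s * (s::'a)) = s"
proof -
  have "s * sinv s * s = s" by (rule sym, rule conjunct1[OF sinv_ok])
  thus ?thesis by (simp add: mult.assoc)
qed

lemma sinv_r: "sinv s * (s * sinv (s::'a)) = sinv s"
proof -
  have "sinv s * s * sinv s = sinv s" by (rule sym, rule conjunct2[OF sinv_ok])
  thus ?thesis by (simp add: mult.assoc)
qed

lemma left_idem: "(s::'a) * sinv s * (s * sinv s) = s * sinv s"
  using sinv_ok[of s] by (metis mult.assoc)

lemma right_idem: "sinv (s::'a) * s * (sinv s * s) = sinv s * s"
  using sinv_ok[of s] by (metis mult.assoc)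

lemma key_le:
  assumes Z: "is_zero (z::'a)" and D: "zero_disjunctive z"
    and N: "\<forall>a. a \<noteq> z \<longrightarrow> a * a \<noteq> z"
  shows "s * sinv s = s * sinv s * (sinv s * (s::'a))"
proof -
  define e where "e = s * sinv s"
  define f where "f = sinv s * s"
  have ee: "e * e = e" using left_idem e_def by simp
  have ff: "f * f = f" using right_idem f_def by simp
  have zl: "\<And>x. z * x = z" and zr: "\<And>x. x * z = z" using Z by (auto simp: is_zero_def)
  have sf: "s * f = s" using sinv_ok[of s] f_def by (metis mult.assoc)
  have es: "e * s = s" using sinv_ok[of s] e_def by (metis mult.assoc)
  have A: "g = z" if gg: "g * g = g" and ge: "g = g * e" and gf: "g * f = z" for g
  proof -
    have "s * g = s * (f * g)" using sf by (metis mult.assoc)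
    also have "\<dots> = s * (g * f)" using idem_comm[OF ff gg] by simp
    also have "\<dots> = z" using gf zr by simp
    finally have sg: "s * g = z" .
    have "(g * s) * (g * s) = g * (s * g) * s" by (simp add: mult.assoc)
    hence "(g * s) * (g * s) = z" using sg zl zr by simp
    hence t: "g * s = z" using N by blast
    have "g = g * s * sinv s" using ge e_def by (simp add: mult.assoc)
    thus ?thesis using t zl by simp
  qed
  show ?thesis
  proof (rule ccontr)
    assume ne: "s * sinv s \<noteq> s * sinv s * (sinv s * s)"
    hence ne': "e * f \<noteq> e" using e_def f_def by simp
    have efi: "(e * f) * (e * f) = e * f" using idem_prod ee ff by blast
    have efle: "e * f = e * f * e"
      using idem_comm[OF ee ff] ee by (metis mult.assoc)
    show False
    proof (cases "e * f = z")
      case True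
      have "e = z" using A[OF ee] ee True by simp
      thus False using ne' True by simp
    next
      case False
      then obtain g where g: "idem g" "g \<noteq> z" "idem_le g e" "e * f * g = z"
        using D efi efle ne' ee
        unfolding zero_disjunctive_def idem_def idem_le_def by blast
      have gg: "g * g = g" and ge: "g = g * e" using g by (auto simp: idem_def idem_le_def)
      have eg: "e * g = g" using idem_comm[OF ee gg] ge by simp
      have "g * f = f * g" using idem_comm[OF gg ff] .
      also have "\<dots> = f * (e * g)" using eg by simp
      also have "\<dots> = e * f * g" using idem_comm[OF ee ff] by (simp add: mult.assoc)
      also have "\<dots> = z" using g by simp
      finally have "g = z" using A[OF gg ge] by simp
      thus False using g by simp
    qed
  qed
qed

lemma key_eq:
  assumes Z: "is_zero (z::'a)" and D: "zero_disjunctive z"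
    and N: "\<forall>a. a \<noteq> z \<longrightarrow> a * a \<noteq> z"
  shows "s * sinv s = sinv s * (s::'a)"
proof -
  have 1: "s * sinv s = s * sinv s * (sinv s * s)" using key_le[OF Z D N] .
  have 2: "sinv s * s = sinv s * s * (s * sinv s)" using key_le[OF Z D N, of "sinv s"] sinv_sinv by simp
  have "s * sinv s * (sinv s * s) = sinv s * s * (s * sinv s)"
    using idem_comm[OF left_idem right_idem] by simp
  thus ?thesis using 1 2 by simp
qed

lemma central:
  assumes Z: "is_zero (z::'a)" and D: "zero_disjunctive z"
    and N: "\<forall>a. a \<noteq> z \<longrightarrow> a * a \<noteq> z"
    and ee: "e * e = e"
  shows "e * s = s * (e::'a)"
proof -
  define p where "p = s * sinv s"
  have p2: "p = sinv s * s" using key_eq[OF Z D N] p_def by simp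
  have pp: "p * p = p" using left_idem p_def by simp
  have ep: "e * p = p * e" using idem_comm[OF ee pp] .
  have sp: "s * p = s" using sinv_ok[of s] p2 by (metis mult.assoc)
  have ps: "p * s = s" using sinv_ok[of s] p_def by (metis mult.assoc)
  define u where "u = s * e"
  define u' where "u' = e * sinv s"
  have "u * u' * u = s * (e * e) * p * e" using p2 by (simp add: u_def u'_def mult.assoc)
  also have "\<dots> = s * (p * e) * e" using ee ep by (simp add: mult.assoc)
  also have "\<dots> = s * e" using sp ee by (metis mult.assoc)
  finally have u1: "u = u * u' * u" using u_def by simp
  have "u' * u * u' = e * (p * (e * e)) * sinv s" using p2 by (simp add: u_def u'_def mult.assoc)
  also have "\<dots> = e * (e * p) * sinv s" using ee ep by simp
  also have "\<dots> = (e * e) * (p * sinv s)" by (simp add: mult.assoc)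
  also have "\<dots> = e * (p * sinv s)" using ee by simp
  also have "\<dots> = e * sinv s" using p2 sinv_r by (simp add: mult.assoc)
  finally have u2: "u' = u' * u * u'" using u'_def by simp
  have uinv: "u' = sinv u" using sinv_uniq[OF u1 u2] .
  have "u * u' = u' * u" using key_eq[OF Z D N, of u] uinv by simp
  moreover have "u * u' = s * e * sinv s"
  proof -
    have "u * u' = s * (e * e) * sinv s" by (simp add: u_def u'_def mult.assoc)
    thus ?thesis using ee by simp
  qed
  moreover have "u' * u = e * p"
  proof -
    have "u' * u = e * p * e" using p2 by (simp add: u_def u'_def mult.assoc)
    also have "\<dots> = p * e * e" using ep by simp
    also have "\<dots> = p * (e * e)" by (simp add: mult.assoc)
    finally show ?thesis using ee ep by simp
  qed
  ultimately have c: "s * e * sinv s = e * p" by simp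
  have "s * e = s * p * e" using sp by simp
  also have "\<dots> = s * e * p" using ep by (simp add: mult.assoc)
  also have "\<dots> = (s * e * sinv s) * s" using p2 by (simp add: mult.assoc)
  also have "\<dots> = e * s" using c ps by (simp add: mult.assoc)
  finally show ?thesis by simp
qed

end

theorem mainTheorem17:
  fixes z :: "'a::semigroup_mult"
  assumes "inverse_semigroup TYPE('a)"
    and "is_zero z"
    and "zero_disjunctive z"
  shows "clifford TYPE('a) \<longleftrightarrow> \<not> (\<exists>a. infinitesimal z a)"
proof
  assume C: "clifford TYPE('a)"
  show "\<not> (\<exists>a. infinitesimal z a)"
  proof
    assume "\<exists>a. infinitesimal z a"
    then obtain a :: 'a where a: "a \<noteq> z" "a * a = z" by (auto simp: infinitesimal_def)
    have zl: "\<And>x. z * x = z" using assms(2) by (auto simp: is_zero_def)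
    define e where "e = a * sinv a"
    have ee: "idem e" using left_idem[OF assms(1), of a] unfolding e_def idem_def .
    have "a = e * a" using sinv_l[OF assms(1), of a] e_def by (simp add: mult.assoc)
    also have "\<dots> = a * e" using C ee by (simp add: clifford_def)
    also have "\<dots> = a * a * sinv a" using e_def by (simp add: mult.assoc)
    also have "\<dots> = z" using a zl by simp
    finally show False using a by simp
  qed
next
  assume "\<not> (\<exists>a. infinitesimal z a)"
  hence N: "\<forall>a. a \<noteq> z \<longrightarrow> a * a \<noteq> z" by (auto simp: infinitesimal_def)
  show "clifford TYPE('a)"
    unfolding clifford_def using assms central[OF assms(1) assms(2) assms(3) N]
    by (auto simp: idem_def)
qed

end
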